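(* Let $\phi:[t_0,\infty)\rightarrow\mathbb{R}^N$ and let $\Omega(t)\in\mathbb{R}^{N\times N}$ solve $$\dot{\Omega}(t)=-\lambda_{\Omega}\Omega(t)+\lambda_{\Omega}\frac{\phi(t)\phi^T(t)}{1+\phi^T(t)\phi(t)},\qquad \Omega(t_0)=\Omega_0,$$ where $\lambda_\Omega>0$ and $\Omega_0$ is symmetric with $0\leq\Omega_0\leq I$. Then for any $\phi$: (1) $\Omega(t)\geq0$ for all $t\geq t_0$; (2) $\Omega(t)\leq I$ for all $t\geq t_0$. Suppose in addition that $\phi$ is bounded and there exist $t_1\geq t_0$ and $t_2>t_1$ such that $\int_{t_1}^{t_2}\phi(\tau)\phi^T(\tau)d\tau\geq\alpha I$ with $\alpha\geq\alpha_0$, where $$\alpha_0=\frac{k_{\Omega}d}{\kappa\Gamma_{max}\rho_{\Omega}\lambda_{\Omega}\exp(-\lambda_{\Omega}(t_2-t_1))},\qquad d=\max_{\tau\in[t_1,t_2]}\{1+\lVert\phi(\tau)\rVert^2\}.$$ Then (3) $\Omega(t)\geq\Omega_{FE}I>(1/(\kappa\Gamma_{max}))I$ for all $t\in[t_2,t_3]$, where $\Omega_{FE}=k_{\Omega}/(\kappa\Gamma_{max})$ and $t_3=t_2-(\ln\rho_{\Omega})/\lambda_{\Omega}$. If in addition $\phi$ is persistently exciting for all $t\geq t_1$, i.e. there are $T>0$ and $\alpha\geq\alpha_0'$ with $\int_t^{t+T}\phi(\tau)\phi^T(\tau)d\tau\geq\alpha I$ for all $t\geq t_1$, where $t_2'=t_1+T$,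 $d'=\max_{\tau\geq t_1}\{1+\lVert\phi(\tau)\rVert^2\}$ and $\alpha_0'=\alpha_0\exp(-\lambda_{\Omega}(t_2-t_2'))d'/d$, then (4) $\Omega(t)\geq\Omega_{FE}I>(1/(\kappa\Gamma_{max}))I$ for all $t\geq t_2'$.
   Context: $\lVert\cdot\rVert$ is the Euclidean 2-norm. For symmetric matrices, $A\leq B$ means $B-A$ is positive semidefinite. The constants are: $\kappa>0$ and $\Gamma_{max}>0$ with $\kappa>\Gamma_{max}^{-1}$, $\rho_{\Omega}\in(0,1)$, and $k_{\Omega}>1$. *)

theory Defs
  imports "HOL-Analysis.Analysis"
begin

definition outer_self :: "real ^ 'n \<Rightarrow> real ^ 'n ^ 'n" where
  "outer_self v = (\<chi> i j. v $ i * v $ j)"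

definition psd :: "real ^ 'n ^ 'n \<Rightarrow> bool" where
  "psd A \<longleftrightarrow> (\<forall>x. 0 \<le> x \<bullet> (A *v x))"

definition pd :: "real ^ 'n ^ 'n \<Rightarrow> bool" where
  "pd A \<longleftrightarrow> (\<forall>x. x \<noteq> 0 \<longrightarrow> 0 < x \<bullet> (A *v x))"

definition loewner_le :: "real ^ 'n ^ 'n \<Rightarrow> real ^ 'n ^ 'n \<Rightarrow> bool" where
  "loewner_le A B \<longleftrightarrow> psd (B - A)"

definition loewner_less :: "real ^ 'n ^ 'n \<Rightarrow> real ^ 'n ^ 'n \<Rightarrow> bool" where
  "loewner_less A B \<longleftrightarrow> pd (B - A)"

end

theory Submission
  imports Defs
begin

lemma key:
  fixes h u :: "real \<Rightarrow> real"
  assumes d: "\<And>t. t \<ge> t0 \<Longrightarrow> (h has_vector_derivative (-lam*h t + lam*u t)) (at t within {t0..})"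
    and ab: "t0 \<le> a" "a \<le> b"
  shows "((\<lambda>\<tau>. exp(lam*\<tau>)*(lam*u \<tau>)) has_integral (exp(lam*b)*h b - exp(lam*a)*h a)) {a..b}"
proof -
  have "((\<lambda>\<tau>. exp(lam*\<tau>)*h \<tau>) has_vector_derivative exp(lam*\<tau>)*(lam*u \<tau>)) (at \<tau> within {a..b})"
    if "\<tau> \<in> {a..b}" for \<tau>
  proof -
    have "(h has_real_derivative (-lam*h \<tau> + lam*u \<tau>)) (at \<tau> within {a..b})"
      using d[of \<tau>] that ab has_vector_derivative_within_subset[of h _ \<tau> "{t0..}" "{a..b}"]
      by (auto simp: has_real_derivative_iff_has_vector_derivative)
    then have "((\<lambda>\<tau>. exp(lam*\<tau>)*h \<tau>) has_real_derivative
       (exp(lam*\<tau>)*lam) * h \<tau> + exp(lam*\<tau>) * (-lam*h \<tau> + lam*u \<tau>)) (at \<tau> within {a..b})"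
      by (intro derivative_eq_intros) auto
    moreover have "(exp(lam*\<tau>)*lam) * h \<tau> + exp(lam*\<tau>) * (-lam*h \<tau> + lam*u \<tau>) = exp(lam*\<tau>)*(lam*u \<tau>)"
      by (simp add: algebra_simps)
    ultimately show ?thesis by (simp add: has_real_derivative_iff_has_vector_derivative)
  qed
  then show ?thesis
    using fundamental_theorem_of_calculus[OF ab(2), of "\<lambda>\<tau>. exp(lam*\<tau>)*h \<tau>" "\<lambda>\<tau>. exp(lam*\<tau>)*(lam*u \<tau>)"]
    by simp
qed

lemma quad_outer: "x \<bullet> (outer_self v *v x) = (x \<bullet> v)\<^sup>2"
  by (simp add: outer_self_def inner_vec_def matrix_vector_mult_def power2_eq_square
      sum_distrib_left sum_distrib_right mult.commute mult.left_commute inner_commute)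

lemma bl_quad: "bounded_linear (\<lambda>M::real^'n^'n. x \<bullet> (M *v x))"
proof -
  have "linear (\<lambda>M::real^'n^'n. x \<bullet> (M *v x))"
    by (rule linearI) (simp_all add: matrix_vector_mult_add_rdistrib inner_add_right
         flip: scaleR_matrix_vector_assoc)
  then show ?thesis by (simp add: linear_conv_bounded_linear)
qed

lemma quad_scaleI: "(x::real^'n) \<bullet> ((c *\<^sub>R mat 1) *v x) = c * (x \<bullet> x)"
  by (simp flip: scaleR_matrix_vector_assoc)

lemma loewner_le_iff: "loewner_le A B \<longleftrightarrow> (\<forall>x. x \<bullet> (A *v x) \<le> x \<bullet> (B *v x))"
  by (simp add: loewner_le_def psd_def matrix_vector_mult_diff_rdistrib inner_diff_right)

lemma less_lemma:
  assumes c: "0 < c" and k: "1 < k"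
  shows "loewner_less ((1 / c) *\<^sub>R mat 1) ((k / c) *\<^sub>R (mat 1 :: real^'m^'m))"
  unfolding loewner_less_def pd_def
proof (intro allI impI)
  fix x :: "real^'m" assume "x \<noteq> 0"
  have "x \<bullet> (((k / c) *\<^sub>R mat 1 - (1 / c) *\<^sub>R mat 1) *v x) = (k / c - 1 / c) * (x \<bullet> x)"
    by (simp add: matrix_vector_mult_diff_rdistrib inner_diff_right quad_scaleI algebra_simps)
  moreover have "1 / c < k / c" using c k by (simp add: divide_strict_right_mono)
  ultimately show "0 < x \<bullet> (((k / c) *\<^sub>R mat 1 - (1 / c) *\<^sub>R mat 1) *v x)"
    using \<open>x \<noteq> 0\<close> by simp
qed

lemma q_deriv:
  fixes \<phi> :: "real \<Rightarrow> real ^ 'n" and \<Omega> :: "real \<Rightarrow> real ^ 'n ^ 'n"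
  assumes ode: "\<And>t. t \<ge> t0 \<Longrightarrow>
       (\<Omega> has_vector_derivative
          (- lam *\<^sub>R \<Omega> t + lam *\<^sub>R ((1 / (1 + \<phi> t \<bullet> \<phi> t)) *\<^sub>R outer_self (\<phi> t))))
        (at t within {t0..})"
    and t: "t \<ge> t0"
  shows "((\<lambda>t. x \<bullet> (\<Omega> t *v x)) has_vector_derivative
     (- lam * (x \<bullet> (\<Omega> t *v x)) + lam * ((x \<bullet> \<phi> t)\<^sup>2 / (1 + \<phi> t \<bullet> \<phi> t)))) (at t within {t0..})"
proof -
  have e: "x \<bullet> ((- lam *\<^sub>R \<Omega> t + lam *\<^sub>R ((1 / (1 + \<phi> t \<bullet> \<phi> t)) *\<^sub>R outer_self (\<phi> t))) *v x)
     = - lam * (x \<bullet> (\<Omega> t *v x)) + lam * ((x \<bullet> \<phi> t)\<^sup>2 / (1 + \<phi> t \<bullet> \<phi> t))"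
    by (simp only: matrix_vector_mult_add_rdistrib inner_add_right quad_outer
         flip: scaleR_matrix_vector_assoc) (simp add: quad_outer)
  show ?thesis
    using bounded_linear.has_vector_derivative[OF bl_quad[of x] ode[OF t]] unfolding e .
qed

theorem lemma6:
  fixes \<phi> :: "real \<Rightarrow> real ^ 'n"
    and \<Omega> :: "real \<Rightarrow> real ^ 'n ^ 'n"
    and t0 lam \<kappa> \<Gamma>max \<rho> k :: real
  assumes kappa_Gamma: "\<kappa> > 0" "\<Gamma>max > 0" "\<kappa> > 1 / \<Gamma>max"
    and rho: "0 < \<rho>" "\<rho> < 1"
    and k: "k > 1"
    and lam: "lam > 0"
    and ode: "\<And>t. t \<ge> t0 \<Longrightarrow>
       (\<Omega> has_vector_derivative
          (- lam *\<^sub>R \<Omega> t + lam *\<^sub>R ((1 / (1 + \<phi> t \<bullet> \<phi> t)) *\<^sub>R outer_self (\<phi> t))))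
        (at t within {t0..})"
    and sym0: "transpose (\<Omega> t0) = \<Omega> t0"
    and psd0: "loewner_le 0 (\<Omega> t0)"
    and leI0: "loewner_le (\<Omega> t0) (mat 1)"
  shows
    "(\<forall>t\<ge>t0. loewner_le 0 (\<Omega> t))
   \<and> (\<forall>t\<ge>t0. loewner_le (\<Omega> t) (mat 1))
   \<and> (\<forall>t1 t2 \<alpha>.
        let d = (SUP \<tau>\<in>{t1..t2}. 1 + (norm (\<phi> \<tau>))\<^sup>2);
            \<alpha>0 = k * d / (\<kappa> * \<Gamma>max * \<rho> * lam * exp (- lam * (t2 - t1)));
            \<Omega>FE = k / (\<kappa> * \<Gamma>max);
            t3 = t2 - ln \<rho> / lam
        in (bounded (\<phi> ` {t0..}) \<and> t0 \<le> t1 \<and> t1 < t2 \<and> \<alpha> \<ge> \<alpha>0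
            \<and> loewner_le (\<alpha> *\<^sub>R mat 1) (integral {t1..t2} (\<lambda>\<tau>. outer_self (\<phi> \<tau>))))
           \<longrightarrow> (\<forall>t\<in>{t2..t3}. loewner_le (\<Omega>FE *\<^sub>R mat 1) (\<Omega> t)
                 \<and> loewner_less ((1 / (\<kappa> * \<Gamma>max)) *\<^sub>R mat 1) (\<Omega>FE *\<^sub>R mat 1)))
   \<and> (\<forall>t1 t2 \<alpha> T \<beta>.
        let d = (SUP \<tau>\<in>{t1..t2}. 1 + (norm (\<phi> \<tau>))\<^sup>2);
            \<alpha>0 = k * d / (\<kappa> * \<Gamma>max * \<rho> * lam * exp (- lam * (t2 - t1)));
            \<Omega>FE = k / (\<kappa> * \<Gamma>max);
            t2' = t1 + T;
            d' = (SUP \<tau>\<in>{t1..}. 1 + (norm (\<phi> \<tau>))\<^sup>2);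
            \<alpha>0' = \<alpha>0 * exp (- lam * (t2 - t2')) * d' / d
        in (bounded (\<phi> ` {t0..}) \<and> t0 \<le> t1 \<and> t1 < t2 \<and> \<alpha> \<ge> \<alpha>0
            \<and> loewner_le (\<alpha> *\<^sub>R mat 1) (integral {t1..t2} (\<lambda>\<tau>. outer_self (\<phi> \<tau>)))
            \<and> T > 0 \<and> \<beta> \<ge> \<alpha>0'
            \<and> (\<forall>t\<ge>t1. loewner_le (\<beta> *\<^sub>R mat 1) (integral {t..t+T} (\<lambda>\<tau>. outer_self (\<phi> \<tau>)))))
           \<longrightarrow> (\<forall>t\<ge>t2'. loewner_le (\<Omega>FE *\<^sub>R mat 1) (\<Omega> t)
                 \<and> loewner_less ((1 / (\<kappa> * \<Gamma>max)) *\<^sub>R mat 1) (\<Omega>FE *\<^sub>R mat 1)))"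
proof -
  define q where "q x t = x \<bullet> (\<Omega> t *v x)" for x t
  define w where "w x t = (x \<bullet> \<phi> t)\<^sup>2 / (1 + \<phi> t \<bullet> \<phi> t)" for x t
  have pos1: "0 < 1 + \<phi> t \<bullet> \<phi> t" for t
    by (simp add: add_pos_nonneg)
  have dq: "t \<ge> t0 \<Longrightarrow> (q x has_vector_derivative (-lam * q x t + lam * w x t)) (at t within {t0..})" for x t
    unfolding q_def w_def by (rule q_deriv[OF ode])
  have w0: "0 \<le> w x t" for x t unfolding w_def using pos1[of t] by simp
  have wle: "w x t \<le> x \<bullet> x" for x t
  proof -
    have "(x \<bullet> \<phi> t)\<^sup>2 \<le> x \<bullet> x * (\<phi> t \<bullet> \<phi> t)" by (rule Cauchy_Schwarz_ineq)
    also have "\<dots> \<le> (x \<bullet> x) * (1 + \<phi> t \<bullet> \<phi> t)" by (simp add: mult_left_mono)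
    finally show ?thesis unfolding w_def using pos1[of t] by (simp add: divide_le_eq)
  qed
  have mono: "exp(lam*a) * q x a \<le> exp(lam*b) * q x b" if ab: "t0 \<le> a" "a \<le> b" for x a b
  proof -
    have "0 \<le> exp(lam*b)*q x b - exp(lam*a)*q x a"
      by (rule has_integral_nonneg[OF key[where h="q x" and u="w x", OF dq ab]])
         (use w0 lam in \<open>auto intro!: mult_nonneg_nonneg\<close>)
    then show ?thesis by simp
  qed
  have P1: "0 \<le> q x t" if "t \<ge> t0" for x t
  proof -
    have "0 \<le> q x t0" using psd0 unfolding q_def by (simp add: loewner_le_iff)
    then have "0 \<le> exp(lam*t0) * q x t0" by simp
    also have "\<dots> \<le> exp(lam*t) * q x t" using mono[of t0 t x] that by simp
    finally have "0 \<le> exp(lam*t) * q x t" .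
    then show ?thesis by (simp add: zero_le_mult_iff)
  qed
  have P2: "q x t \<le> x \<bullet> x" if "t \<ge> t0" for x t
  proof -
    define p where "p t = x \<bullet> x - q x t" for t
    have dp: "(p has_vector_derivative (-lam * p t + lam * (x \<bullet> x - w x t))) (at t within {t0..})"
      if "t \<ge> t0" for t
    proof -
      have "(p has_vector_derivative (0 - (-lam * q x t + lam * w x t))) (at t within {t0..})"
        unfolding p_def by (intro has_vector_derivative_diff has_vector_derivative_const dq that)
      moreover have "0 - (-lam * q x t + lam * w x t) = -lam * p t + lam * (x \<bullet> x - w x t)"
        by (simp add: p_def algebra_simps)
      ultimately show ?thesis by simp
    qed
    have "0 \<le> exp(lam*t)*p t - exp(lam*t0)*p t0"
      by (rule has_integral_nonneg[OF key[where h="p" and u="\<lambda>t. x \<bullet> x - w x t", OF dp order_refl that]])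
         (use wle lam in \<open>auto intro!: mult_nonneg_nonneg\<close>)
    moreover have "0 \<le> p t0" using leI0 unfolding p_def q_def by (simp add: loewner_le_iff)
    ultimately have "0 \<le> exp(lam*t) * p t"
      by (smt (verit) exp_gt_zero mult_nonneg_nonneg)
    then show ?thesis by (simp add: zero_le_mult_iff p_def)
  qed
  have W: "exp(lam*(sa - t)) * lam * \<gamma> * (x \<bullet> x) / D \<le> q x t"
    if st: "t0 \<le> sa" "sa \<le> ee" "ee \<le> t" and D: "0 < D" "\<forall>\<tau>\<in>{sa..ee}. 1 + \<phi> \<tau> \<bullet> \<phi> \<tau> \<le> D"
      and g: "0 < \<gamma>" "loewner_le (\<gamma> *\<^sub>R mat 1) (integral {sa..ee} (\<lambda>\<tau>. outer_self (\<phi> \<tau>)))"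
    for x sa ee t D \<gamma>
  proof (cases "x = 0")
    case True then show ?thesis by (simp add: q_def)
  next
    case False
    define I where "I = integral {sa..ee} (\<lambda>\<tau>. outer_self (\<phi> \<tau>))"
    have Ige: "\<gamma> * (x \<bullet> x) \<le> x \<bullet> (I *v x)"
      using g(2) unfolding I_def by (simp add: loewner_le_iff quad_scaleI)
    have int: "(\<lambda>\<tau>. outer_self (\<phi> \<tau>)) integrable_on {sa..ee}"
    proof (rule ccontr)
      assume "\<not> ?thesis"
      then have "I = 0" unfolding I_def by (rule not_integrable_integral)
      then have "\<gamma> * (x \<bullet> x) \<le> 0" using Ige by simp
      moreover have "0 < \<gamma> * (x \<bullet> x)" using False g(1) by simp
      ultimately show False by simp
    qed
    have h1: "((\<lambda>\<tau>. (x \<bullet> \<phi> \<tau>)\<^sup>2) has_integral x \<bullet> (I *v x)) {sa..ee}"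
      using has_integral_linear[OF integrable_integral[OF int] bl_quad[of x]]
      unfolding I_def by (simp add: o_def quad_outer)
    have h2: "((\<lambda>\<tau>. exp(lam*\<tau>)*(lam*w x \<tau>)) has_integral (exp(lam*ee)*q x ee - exp(lam* sa)*q x sa)) {sa..ee}"
      by (rule key[where h="q x" and u="w x", OF dq st(1,2)])
    have le: "(exp(lam* sa)*lam/D) * (x \<bullet> \<phi> \<tau>)\<^sup>2 \<le> exp(lam*\<tau>)*(lam*w x \<tau>)" if "\<tau> \<in> {sa..ee}" for \<tau>
    proof -
      have e1: "exp(lam* sa) \<le> exp(lam*\<tau>)" using that lam by simp
      have e2: "(x \<bullet> \<phi> \<tau>)\<^sup>2/D \<le> w x \<tau>" unfolding w_def
        by (rule divide_left_mono) (use D that pos1[of \<tau>] in auto)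
      have "(exp(lam* sa)*lam/D) * (x \<bullet> \<phi> \<tau>)\<^sup>2 = exp(lam* sa) * (lam * ((x \<bullet> \<phi> \<tau>)\<^sup>2/D))"
        by simp
      also have "\<dots> \<le> exp(lam*\<tau>) * (lam * w x \<tau>)"
        using e1 e2 lam w0[of x \<tau>] D(1) by (intro mult_mono mult_left_mono) auto
      finally show ?thesis .
    qed
    have "(exp(lam* sa)*lam/D) * (x \<bullet> (I *v x)) \<le> exp(lam*ee)*q x ee - exp(lam* sa)*q x sa"
      using has_integral_le[OF has_integral_mult_right[OF h1] h2] le by blast
    moreover have "(exp(lam* sa)*lam/D) * (\<gamma> * (x \<bullet> x)) \<le> (exp(lam* sa)*lam/D) * (x \<bullet> (I *v x))"
      using Ige lam D by (intro mult_left_mono) auto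
    moreover have "0 \<le> exp(lam* sa) * q x sa" using P1 st by simp
    moreover have "exp(lam*ee)*q x ee \<le> exp(lam*t)*q x t" using mono[of ee t x] st by simp
    moreover have "exp(lam* sa)*lam*\<gamma>*(x \<bullet> x)/D = (exp(lam* sa)*lam/D) * (\<gamma> * (x \<bullet> x))"
      by simp
    ultimately have "exp(lam* sa)*lam*\<gamma>*(x \<bullet> x)/D \<le> exp(lam*t)*q x t"
      by linarith
    moreover have "exp(lam*(sa - t)) * lam * \<gamma> * (x \<bullet> x) / D = (exp(lam* sa)*lam*\<gamma>*(x \<bullet> x)/D) / exp(lam*t)"
      by (simp add: exp_diff right_diff_distrib)
    moreover have "(exp(lam * sa)*lam*\<gamma>*(x \<bullet> x)/D) / exp(lam*t) \<le> q x t"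
      by (subst pos_divide_le_eq) (use calculation(1) in \<open>auto simp: mult.commute\<close>)
    ultimately show ?thesis by simp
  qed
  have bdd: "bdd_above ((\<lambda>\<tau>. 1 + (norm (\<phi> \<tau>))\<^sup>2) ` S)" if hb: "bounded (\<phi> ` {t0..})" and hs: "S \<subseteq> {t0..}" for S
  proof -
    obtain B where B: "\<forall>y\<in>\<phi> ` {t0..}. norm y \<le> B" using hb[unfolded bounded_iff] by blast
    show ?thesis
    proof (rule bdd_aboveI2)
      fix \<tau> assume "\<tau> \<in> S"
      then have "norm (\<phi> \<tau>) \<le> B" using B hs by auto
      then show "1 + (norm (\<phi> \<tau>))\<^sup>2 \<le> 1 + B\<^sup>2" using power_mono[OF _ norm_ge_zero, of _ B 2] by simp
    qed
  qed
  have supge: "1 + \<phi> \<tau> \<bullet> \<phi> \<tau> \<le> (SUP \<tau>\<in>S. 1 + (norm (\<phi> \<tau>))\<^sup>2)"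
    if "bounded (\<phi> ` {t0..})" "S \<subseteq> {t0..}" "\<tau> \<in> S" for S \<tau>
    using cSUP_upper[OF that(3) bdd[OF that(1,2)]] by (simp add: dot_square_norm)
  have kG: "0 < \<kappa> * \<Gamma>max" using kappa_Gamma by simp
  have FE: "loewner_le ((k / (\<kappa> * \<Gamma>max)) *\<^sub>R mat 1) (\<Omega> t)"
    if "\<And>x. k / (\<kappa> * \<Gamma>max) * (x \<bullet> x) \<le> q x t" for t
    using that unfolding q_def by (simp add: loewner_le_iff quad_scaleI)
  have A1: "\<forall>t\<ge>t0. loewner_le 0 (\<Omega> t)" using P1 by (simp add: loewner_le_iff q_def)
  have A2: "\<forall>t\<ge>t0. loewner_le (\<Omega> t) (mat 1)" using P2 by (simp add: loewner_le_iff q_def)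
  have c: "0 < \<kappa> * \<Gamma>max" by (rule kG)
  have A3: "\<forall>t1 t2 \<alpha>.
        let d = (SUP \<tau>\<in>{t1..t2}. 1 + (norm (\<phi> \<tau>))\<^sup>2);
            \<alpha>0 = k * d / (\<kappa> * \<Gamma>max * \<rho> * lam * exp (- lam * (t2 - t1)));
            \<Omega>FE = k / (\<kappa> * \<Gamma>max);
            t3 = t2 - ln \<rho> / lam
        in (bounded (\<phi> ` {t0..}) \<and> t0 \<le> t1 \<and> t1 < t2 \<and> \<alpha> \<ge> \<alpha>0
            \<and> loewner_le (\<alpha> *\<^sub>R mat 1) (integral {t1..t2} (\<lambda>\<tau>. outer_self (\<phi> \<tau>))))
           \<longrightarrow> (\<forall>t\<in>{t2..t3}. loewner_le (\<Omega>FE *\<^sub>R mat 1) (\<Omega> t)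
                 \<and> loewner_less ((1 / (\<kappa> * \<Gamma>max)) *\<^sub>R mat 1) (\<Omega>FE *\<^sub>R mat 1))"
    unfolding Let_def
    apply (intro allI impI ballI conjI)
    subgoal premises prems for t1 t2 \<alpha> t
    proof -
      define d where "d = (SUP \<tau>\<in>{t1..t2}. 1 + (norm (\<phi> \<tau>))\<^sup>2)"
      define E where "E = exp (- lam * (t2 - t1))"
      define X where "X = exp (lam * (t1 - t))"
      have bd: "bounded (\<phi> ` {t0..})" "t0 \<le> t1" "t1 < t2"
        "k * d / (\<kappa> * \<Gamma>max * \<rho> * lam * E) \<le> \<alpha>"
        "loewner_le (\<alpha> *\<^sub>R mat 1) (integral {t1..t2} (\<lambda>\<tau>. outer_self (\<phi> \<tau>)))"
        "t2 \<le> t" "t \<le> t2 - ln \<rho> / lam"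
        using prems unfolding d_def E_def by auto
      have dge: "\<forall>\<tau>\<in>{t1..t2}. 1 + \<phi> \<tau> \<bullet> \<phi> \<tau> \<le> d"
        using supge[OF bd(1), of "{t1..t2}"] bd unfolding d_def by auto
      have d1: "1 \<le> d" using dge bd(3) by (smt (verit) atLeastAtMost_iff inner_ge_zero)
      have Epos: "0 < E" unfolding E_def by simp
      have den: "0 < \<kappa> * \<Gamma>max * \<rho> * lam * E" using c rho lam Epos by simp
      have kd: "k * d \<le> \<alpha> * (\<kappa> * \<Gamma>max * \<rho> * lam * E)"
        using bd(4) den by (simp add: pos_divide_le_eq mult.commute)
      have apos: "0 < \<alpha>"
      proof -
        have "0 < k * d" using k d1 by simp
        then have "0 < \<alpha> * (\<kappa> * \<Gamma>max * \<rho> * lam * E)" using kd by linarith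
        then show ?thesis using den by (simp add: zero_less_mult_iff)
      qed
      have "lam * t \<le> lam * (t2 - ln \<rho> / lam)" using bd(7) lam by (intro mult_left_mono) auto
      also have "\<dots> = lam * t2 - ln \<rho>" using lam by (simp add: right_diff_distrib)
      finally have tl: "(t - t2) * lam \<le> - ln \<rho>" by (simp add: algebra_simps)
      have "\<rho> * E = exp (ln \<rho> + - lam * (t2 - t1))" unfolding E_def using rho by (simp only: exp_add exp_ln)
      also have "\<dots> \<le> X" unfolding X_def using tl by (simp add: algebra_simps)
      finally have rX: "\<rho> * E \<le> X" .
      have "k * d \<le> \<alpha> * (\<kappa> * \<Gamma>max * \<rho> * lam * E)" by (rule kd)
      also have "\<dots> = (\<alpha> * \<kappa> * \<Gamma>max * lam) * (\<rho> * E)" by (simp add: algebra_simps)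
      also have "\<dots> \<le> (\<alpha> * \<kappa> * \<Gamma>max * lam) * X"
        using rX apos kappa_Gamma lam by (intro mult_left_mono) auto
      finally have kd2: "k * d \<le> (\<alpha> * \<kappa> * \<Gamma>max * lam) * X" .
      have kc: "k / (\<kappa> * \<Gamma>max) \<le> X * lam * \<alpha> / d"
        using kd2 c d1 by (simp add: field_simps)
      have "k / (\<kappa> * \<Gamma>max) * (x \<bullet> x) \<le> q x t" for x
      proof -
        have "k / (\<kappa> * \<Gamma>max) * (x \<bullet> x) \<le> (X * lam * \<alpha> / d) * (x \<bullet> x)"
          using kc by (intro mult_right_mono) auto
        also have "\<dots> = exp (lam * (t1 - t)) * lam * \<alpha> * (x \<bullet> x) / d" unfolding X_def by simp
        also have "\<dots> \<le> q x t"
          using bd d1 dge apos by (intro W) auto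
        finally show ?thesis .
      qed
      then show ?thesis by (rule FE)
    qed
    subgoal using less_lemma[OF kG k] by simp
    done
  have A4: "\<forall>t1 t2 \<alpha> T \<beta>.
        let d = (SUP \<tau>\<in>{t1..t2}. 1 + (norm (\<phi> \<tau>))\<^sup>2);
            \<alpha>0 = k * d / (\<kappa> * \<Gamma>max * \<rho> * lam * exp (- lam * (t2 - t1)));
            \<Omega>FE = k / (\<kappa> * \<Gamma>max);
            t2' = t1 + T;
            d' = (SUP \<tau>\<in>{t1..}. 1 + (norm (\<phi> \<tau>))\<^sup>2);
            \<alpha>0' = \<alpha>0 * exp (- lam * (t2 - t2')) * d' / d
        in (bounded (\<phi> ` {t0..}) \<and> t0 \<le> t1 \<and> t1 < t2 \<and> \<alpha> \<ge> \<alpha>0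
            \<and> loewner_le (\<alpha> *\<^sub>R mat 1) (integral {t1..t2} (\<lambda>\<tau>. outer_self (\<phi> \<tau>)))
            \<and> T > 0 \<and> \<beta> \<ge> \<alpha>0'
            \<and> (\<forall>t\<ge>t1. loewner_le (\<beta> *\<^sub>R mat 1) (integral {t..t+T} (\<lambda>\<tau>. outer_self (\<phi> \<tau>)))))
           \<longrightarrow> (\<forall>t\<ge>t2'. loewner_le (\<Omega>FE *\<^sub>R mat 1) (\<Omega> t)
                 \<and> loewner_less ((1 / (\<kappa> * \<Gamma>max)) *\<^sub>R mat 1) (\<Omega>FE *\<^sub>R mat 1))"
    unfolding Let_def
    apply (intro allI impI conjI)
    subgoal premises prems for t1 t2 \<alpha> T \<beta> t
    proof -
      define d where "d = (SUP \<tau>\<in>{t1..t2}. 1 + (norm (\<phi> \<tau>))\<^sup>2)"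
      define d' where "d' = (SUP \<tau>\<in>{t1..}. 1 + (norm (\<phi> \<tau>))\<^sup>2)"
      define E where "E = exp (- lam * (t2 - t1))"
      define Y where "Y = exp (lam * T)"
      have bd: "bounded (\<phi> ` {t0..})" "t0 \<le> t1" "t1 < t2" "0 < T"
        "k * d / (\<kappa> * \<Gamma>max * \<rho> * lam * E) * exp (- lam * (t2 - (t1 + T))) * d' / d \<le> \<beta>"
        "\<forall>s\<ge>t1. loewner_le (\<beta> *\<^sub>R mat 1) (integral {s..s+T} (\<lambda>\<tau>. outer_self (\<phi> \<tau>)))"
        "t1 + T \<le> t"
        using prems unfolding d_def d'_def E_def by auto
      have dge: "\<forall>\<tau>\<in>{t1..t2}. 1 + \<phi> \<tau> \<bullet> \<phi> \<tau> \<le> d"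
        using supge[OF bd(1), of "{t1..t2}"] bd unfolding d_def by auto
      have dge': "\<forall>\<tau>\<in>{t1..}. 1 + \<phi> \<tau> \<bullet> \<phi> \<tau> \<le> d'"
        using supge[OF bd(1), of "{t1..}"] bd unfolding d'_def by auto
      have d1: "1 \<le> d" using dge bd(3) by (smt (verit) atLeastAtMost_iff inner_ge_zero)
      have d1': "1 \<le> d'" using dge' by (smt (verit) atLeast_iff inner_ge_zero)
      have Epos: "0 < E" unfolding E_def by simp
      have Ypos: "0 < Y" unfolding Y_def by simp
      have ex: "exp (- lam * (t2 - (t1 + T))) = E * Y" unfolding E_def Y_def
        by (simp add: exp_add[symmetric] algebra_simps)
      have a0': "k * d / (\<kappa> * \<Gamma>max * \<rho> * lam * E) * exp (- lam * (t2 - (t1 + T))) * d' / d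
          = k * d' * Y / (\<kappa> * \<Gamma>max * \<rho> * lam)"
        unfolding ex using Epos d1 c rho lam by (simp add: field_simps)
      have kd: "k * d' * Y \<le> \<beta> * (\<kappa> * \<Gamma>max * \<rho> * lam)"
        using bd(5) c rho lam unfolding a0' by (simp add: pos_divide_le_eq mult.commute)
      have bpos: "0 < \<beta>"
      proof -
        have "0 < k * d' * Y" using k d1' Ypos by simp
        then have "0 < \<beta> * (\<kappa> * \<Gamma>max * \<rho> * lam)" using kd by linarith
        moreover have "0 < \<kappa> * \<Gamma>max * \<rho> * lam" using c rho lam by simp
        ultimately show ?thesis by (rule zero_less_mult_pos2)
      qed
      have "k * d' * Y \<le> \<beta> * (\<kappa> * \<Gamma>max * \<rho> * lam)" by (rule kd)
      also have "\<dots> \<le> \<beta> * (\<kappa> * \<Gamma>max * lam)"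
      proof (intro mult_left_mono)
        have "(\<kappa> * \<Gamma>max * lam) * \<rho> \<le> (\<kappa> * \<Gamma>max * lam) * 1"
          using c rho lam by (intro mult_left_mono) auto
        then show "\<kappa> * \<Gamma>max * \<rho> * lam \<le> \<kappa> * \<Gamma>max * lam" by (simp add: algebra_simps)
      qed (use bpos in auto)
      finally have kd2: "k * d' * Y \<le> \<beta> * (\<kappa> * \<Gamma>max * lam)" .
      have YY: "exp (lam * (t - T - t)) * Y = 1" unfolding Y_def by (simp add: exp_add[symmetric])
      have kc: "k / (\<kappa> * \<Gamma>max) \<le> exp (lam * (t - T - t)) * lam * \<beta> / d'"
      proof -
        define Z where "Z = exp (lam * (t - T - t))"
        have Zpos: "0 < Z" unfolding Z_def by simp
        have "k * d' = (Z * Y) * (k * d')" using YY unfolding Z_def by simp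
        also have "\<dots> = Z * (k * d' * Y)" by (simp add: algebra_simps)
        also have "\<dots> \<le> Z * (\<beta> * (\<kappa> * \<Gamma>max * lam))" using kd2 Zpos by (intro mult_left_mono) auto
        finally have "k * d' \<le> (Z * lam * \<beta>) * (\<kappa> * \<Gamma>max)" by (simp add: algebra_simps)
        then have "k / (\<kappa> * \<Gamma>max) \<le> Z * lam * \<beta> / d'"
          using c d1' by (simp add: pos_divide_le_eq pos_le_divide_eq mult.commute)
        then show ?thesis unfolding Z_def .
      qed
      have win: "loewner_le (\<beta> *\<^sub>R mat 1) (integral {t - T..t} (\<lambda>\<tau>. outer_self (\<phi> \<tau>)))"
        using bd(6)[rule_format, of "t - T"] bd(7) by simp
      have "k / (\<kappa> * \<Gamma>max) * (x \<bullet> x) \<le> q x t" for x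
      proof -
        have "k / (\<kappa> * \<Gamma>max) * (x \<bullet> x) \<le> (exp (lam * (t - T - t)) * lam * \<beta> / d') * (x \<bullet> x)"
          using kc by (intro mult_right_mono) auto
        also have "\<dots> = exp (lam * (t - T - t)) * lam * \<beta> * (x \<bullet> x) / d'" by simp
        also have "\<dots> \<le> q x t"
          using bd d1' dge' bpos win by (intro W) auto
        finally show ?thesis .
      qed
      then show ?thesis by (rule FE)
    qed
    subgoal using less_lemma[OF kG k] by simp
    done
  show ?thesis using A1 A2 A3 A4 by blast
qed

end
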